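(* Let $(X,\mathcal{M},\mu)$ be a non-atomic measure space and $\Phi$ an $N^*$-function. Then every continuous linear functional on $(L_\Phi(X),d_\Phi)$ is identically zero, i.e. $L_\Phi(X)^*=\{0\}$.
   Context: An $N^*$-function is a function $\Phi:\mathbb{R}\to\mathbb{R}$ of the form $\Phi(x)=\int_0^{|x|}p(t)\,dt<+\infty$ for all $x$, where $p:[0,\infty)\to[0,\infty]$ is right-continuous, positive on $(0,\infty)$, non-increasing, and satisfies $\lim_{t\to0^+}p(t)=+\infty$ and $\lim_{t\to+\infty}p(t)=0$. $L_\Phi(X)$ is the space of (classes modulo a.e. equality of) measurable $f$ with $\int_X\Phi(f)\,d\mu<\infty$, with metric $d_\Phi(f,g)=\int_X\Phi(f-g)\,d\mu$. The measure space is non-atomic if every $A\in\mathcal{M}$ with $\mu(A)>0$ contains a measurable $B$ with $0<\mu(B)<\mu(A)$. *)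

theory Defs
  imports "HOL-Analysis.Analysis"
begin

definition N_star_function :: "(real \<Rightarrow> real) \<Rightarrow> bool" where
  "N_star_function \<Phi> \<longleftrightarrow>
     (\<exists>p :: real \<Rightarrow> ennreal.
        (\<forall>t\<ge>0. (p \<longlongrightarrow> p t) (at_right t)) \<and>
        (\<forall>t>0. p t > 0) \<and>
        (\<forall>s t. 0 \<le> s \<longrightarrow> s \<le> t \<longrightarrow> p t \<le> p s) \<and>
        (p \<longlongrightarrow> \<infinity>) (at_right 0) \<and>
        (p \<longlongrightarrow> 0) at_top \<and>
        (\<forall>x. (\<integral>\<^sup>+ t\<in>{0..\<bar>x\<bar>}. p t \<partial>lborel) < \<infinity> \<and>
             \<Phi> x = enn2real (\<integral>\<^sup>+ t\<in>{0..\<bar>x\<bar>}. p t \<partial>lborel)))"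

definition non_atomic :: "'a measure \<Rightarrow> bool" where
  "non_atomic M \<longleftrightarrow>
     (\<forall>A\<in>sets M. emeasure M A > 0 \<longrightarrow>
        (\<exists>B\<in>sets M. B \<subseteq> A \<and> 0 < emeasure M B \<and> emeasure M B < emeasure M A))"

text \<open>Representatives of elements of L_Phi(X) (classes modulo a.e. equality are not
  formed explicitly; continuity w.r.t. d_Phi forces any functional to respect them).\<close>
definition L_Phi :: "'a measure \<Rightarrow> (real \<Rightarrow> real) \<Rightarrow> ('a \<Rightarrow> real) set" where
  "L_Phi M \<Phi> = {f \<in> borel_measurable M. (\<integral>\<^sup>+ x. ennreal (\<Phi> (f x)) \<partial>M) < \<infinity>}"

definition d_Phi :: "'a measure \<Rightarrow> (real \<Rightarrow> real) \<Rightarrow> ('a \<Rightarrow> real) \<Rightarrow> ('a \<Rightarrow> real) \<Rightarrow> ennreal" where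
  "d_Phi M \<Phi> f g = (\<integral>\<^sup>+ x. ennreal (\<Phi> (f x - g x)) \<partial>M)"

definition continuous_linear_functional_L_Phi ::
    "'a measure \<Rightarrow> (real \<Rightarrow> real) \<Rightarrow> (('a \<Rightarrow> real) \<Rightarrow> real) \<Rightarrow> bool" where
  "continuous_linear_functional_L_Phi M \<Phi> T \<longleftrightarrow>
     (\<forall>f\<in>L_Phi M \<Phi>. \<forall>g\<in>L_Phi M \<Phi>. T (\<lambda>x. f x + g x) = T f + T g) \<and>
     (\<forall>f\<in>L_Phi M \<Phi>. \<forall>c::real. T (\<lambda>x. c * f x) = c * T f) \<and>
     (\<forall>f\<in>L_Phi M \<Phi>. \<forall>\<epsilon>>0. \<exists>\<delta>>0. \<forall>g\<in>L_Phi M \<Phi>.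
        d_Phi M \<Phi> f g < ennreal \<delta> \<longrightarrow> \<bar>T g - T f\<bar> < \<epsilon>)"

end

theory Submission
  imports Defs
begin

lemma antimono_borel:
  fixes g :: "real \<Rightarrow> ennreal"
  assumes "\<And>s t. s \<le> t \<Longrightarrow> g t \<le> g s"
  shows "g \<in> borel_measurable borel"
proof (rule borel_measurableI_greater)
  fix y
  have "is_interval {x. y < g x}" unfolding is_interval_1 using assms
    by (auto intro: less_le_trans)
  then show "{x \<in> space borel. y < g x} \<in> sets borel"
    using real_interval_borel_measurable by simp
qed

lemma Nstar_props:
  assumes "N_star_function \<Phi>"
  shows "(\<forall>x. 0 \<le> \<Phi> x) \<and> \<Phi> 0 = 0 \<and> (\<forall>x. \<Phi> (-x) = \<Phi> x) \<and> (\<forall>x. x \<noteq> 0 \<longrightarrow> 0 < \<Phi> x)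
    \<and> \<Phi> \<in> borel_measurable borel \<and> (\<forall>c y. 1 \<le> c \<longrightarrow> \<Phi> (c*y) \<le> c * \<Phi> y)
    \<and> (\<forall>y. (\<lambda>n. \<Phi> (real (Suc n) * y) / real (Suc n)) \<longlonglongrightarrow> 0)"
proof -
  obtain p :: "real \<Rightarrow> ennreal" where pos: "\<forall>t>0. p t > 0"
    and anti: "\<forall>s t. 0 \<le> s \<longrightarrow> s \<le> t \<longrightarrow> p t \<le> p s"
    and limtop: "(p \<longlongrightarrow> 0) at_top"
    and fin: "\<forall>x. (\<integral>\<^sup>+ t\<in>{0..\<bar>x\<bar>}. p t \<partial>lborel) < \<infinity> \<and>
             \<Phi> x = enn2real (\<integral>\<^sup>+ t\<in>{0..\<bar>x\<bar>}. p t \<partial>lborel)"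
    using assms unfolding N_star_function_def by blast
  define q where "q t = p (max 0 t)" for t
  have qanti: "q t \<le> q s" if "s \<le> t" for s t
    unfolding q_def using anti that by auto
  have qm[measurable]: "q \<in> borel_measurable borel"
    by (rule antimono_borel) (use qanti in auto)
  define F where "F a = (\<integral>\<^sup>+ t. q t * indicator {0..a} t \<partial>lborel)" for a
  have F_eq: "(\<integral>\<^sup>+ t\<in>{0..a}. p t \<partial>lborel) = F a" for a
    unfolding F_def by (rule nn_integral_cong) (auto simp: q_def indicator_def)
  have Phi: "\<Phi> x = enn2real (F \<bar>x\<bar>)" for x using fin F_eq by auto
  have Ffin: "F a < \<infinity>" if "a \<ge> 0" for a
  proof -
    have "\<bar>a\<bar> = a" using that by simp
    then show ?thesis using fin F_eq[of a] by metis
  qed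
  have scale_eq: "F (c*a) = ennreal c * (\<integral>\<^sup>+ x. q (c*x) * indicator {0..a} x \<partial>lborel)"
    if "c > 0" for c a
  proof -
    have "F (c*a) = ennreal \<bar>c\<bar> * (\<integral>\<^sup>+x. q (0 + c*x) * indicator {0..c*a} (0 + c*x) \<partial>lborel)"
      unfolding F_def by (rule nn_integral_real_affine) (use that in auto)
    also have "(\<lambda>x. q (0 + c*x) * indicator {0..c*a} (0 + c*x)) = (\<lambda>x. q (c*x) * indicator {0..a} x)"
      using that by (auto simp: indicator_def zero_le_mult_iff fun_eq_iff)
    finally show ?thesis using that by simp
  qed
  have Fscale: "F (c*a) \<le> ennreal c * F a" if "c \<ge> 1" "a \<ge> 0" for c a
  proof -
    have "(\<integral>\<^sup>+ x. q (c*x) * indicator {0..a} x \<partial>lborel) \<le> F a"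
      unfolding F_def
    proof (rule nn_integral_mono)
      fix x show "q (c*x) * indicator {0..a} x \<le> q x * indicator {0..a} x"
      proof (cases "x \<in> {0..a}")
        case True
        then have "x \<le> c*x" using that by (simp add: mult_le_cancel_right1)
        then show ?thesis using qanti True by auto
      qed auto
    qed
    then show ?thesis using scale_eq[of c a] that by (simp add: mult_left_mono)
  qed
  have P1: "\<forall>x. 0 \<le> \<Phi> x" using Phi by simp
  have F0: "F 0 = 0"
  proof -
    have "AE t in lborel. q t * indicator {0..0} t = 0"
      using AE_lborel_singleton[of 0] by eventually_elim (auto simp: indicator_def)
    then show ?thesis unfolding F_def by (subst nn_integral_0_iff_AE) auto
  qed
  have P2: "\<Phi> 0 = 0" using Phi F0 by simp
  have P3: "\<forall>x. \<Phi> (-x) = \<Phi> x" using Phi by simp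
  have P4: "\<forall>x. x \<noteq> 0 \<longrightarrow> 0 < \<Phi> x"
  proof (intro allI impI)
    fix x :: real assume "x \<noteq> 0"
    define a where "a = \<bar>x\<bar>"
    have a: "a > 0" using \<open>x \<noteq> 0\<close> a_def by simp
    have "(\<integral>\<^sup>+ t. p a * indicator {0..a} t \<partial>lborel) \<le> F a"
      unfolding F_def
    proof (rule nn_integral_mono)
      fix t show "p a * indicator {0..a} t \<le> q t * indicator {0..a} t"
        using anti by (auto simp: indicator_def q_def)
    qed
    moreover have "(\<integral>\<^sup>+ t. p a * indicator {0..a} t \<partial>lborel) = p a * ennreal a"
      using a by (simp add: nn_integral_cmult_indicator)
    moreover have "0 < p a * ennreal a" using pos a by (simp add: ennreal_zero_less_mult_iff)
    ultimately have "0 < F a" by auto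
    then show "0 < \<Phi> x" using Phi[of x] Ffin[of a] a a_def by (simp add: enn2real_positive_iff)
  qed
  have Fmono: "F a \<le> F b" if "a \<le> b" for a b
    unfolding F_def by (rule nn_integral_mono) (use that in \<open>auto simp: indicator_def\<close>)
  have P5: "\<Phi> \<in> borel_measurable borel"
  proof -
    define \<Psi> where "\<Psi> t = enn2real (F (max 0 t))" for t
    have "mono \<Psi>"
    proof (rule monoI)
      fix x y :: real assume "x \<le> y"
      have "F (max 0 y) < \<infinity>" by (rule Ffin) simp
      then show "\<Psi> x \<le> \<Psi> y" unfolding \<Psi>_def
        using Fmono[of "max 0 x" "max 0 y"] \<open>x \<le> y\<close> by (intro enn2real_mono) auto
    qed
    then have "\<Psi> \<in> borel_measurable borel" by (rule borel_measurable_mono)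
    moreover have "\<Phi> = (\<lambda>x. \<Psi> \<bar>x\<bar>)" by (auto simp: \<Psi>_def Phi fun_eq_iff)
    ultimately show ?thesis
      using measurable_compose[OF borel_measurable_abs, of \<Psi>] by simp
  qed
  have P6: "\<forall>c y. 1 \<le> c \<longrightarrow> \<Phi> (c*y) \<le> c * \<Phi> y"
  proof (intro allI impI)
    fix c y :: real assume c: "1 \<le> c"
    have "\<Phi> (c*y) = enn2real (F (c * \<bar>y\<bar>))" using Phi c by (simp add: abs_mult)
    also have "\<dots> \<le> enn2real (ennreal c * F \<bar>y\<bar>)"
      using Fscale[of c "\<bar>y\<bar>"] c Ffin[of "\<bar>y\<bar>"] by (intro enn2real_mono) (auto simp: ennreal_mult_less_top)
    also have "\<dots> = c * \<Phi> y" using c Phi by (simp add: enn2real_mult)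
    finally show "\<Phi> (c*y) \<le> c * \<Phi> y" .
  qed
  have P7: "\<forall>y. (\<lambda>n. \<Phi> (real (Suc n) * y) / real (Suc n)) \<longlonglongrightarrow> 0"
  proof
    fix y :: real
    show "(\<lambda>n. \<Phi> (real (Suc n) * y) / real (Suc n)) \<longlonglongrightarrow> 0"
    proof (cases "y = 0")
      case True then show ?thesis using P2 by simp
    next
      case False
      define a where "a = \<bar>y\<bar>"
      have a: "a > 0" using False a_def by simp
      define G where "G n = (\<integral>\<^sup>+ x. q (real (Suc n) * x) * indicator {0..a} x \<partial>lborel)" for n
      have eq: "\<Phi> (real (Suc n) * y) / real (Suc n) = enn2real (G n)" for n
      proof -
        have "\<Phi> (real (Suc n) * y) = enn2real (F (real (Suc n) * a))"
          using Phi by (simp add: abs_mult a_def)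
        also have "\<dots> = real (Suc n) * enn2real (G n)"
          using scale_eq[of "real (Suc n)" a] by (simp add: G_def enn2real_mult del: of_nat_Suc)
        finally show ?thesis by simp
      qed
      have "G \<longlonglongrightarrow> (\<integral>\<^sup>+ (x::real). 0 \<partial>lborel)"
        unfolding G_def
      proof (rule nn_integral_dominated_convergence[where w="\<lambda>x. q x * indicator {0..a} x"
          and u="\<lambda>i x. q (real (Suc i) * x) * indicator {0..a} x" and u'="\<lambda>x. 0"])
        show "(\<integral>\<^sup>+ x. q x * indicator {0..a} x \<partial>lborel) < \<infinity>"
          using Ffin[of a] a unfolding F_def by simp
        show "AE x in lborel. q (real (Suc j) * x) * indicator {0..a} x \<le> q x * indicator {0..a} x" for j
        proof (rule AE_I2)
          fix x show "q (real (Suc j) * x) * indicator {0..a} x \<le> q x * indicator {0..a} x"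
          proof (cases "x \<in> {0..a}")
            case True
            then have "x \<le> real (Suc j) * x" by (simp add: mult_le_cancel_right1)
            then show ?thesis using qanti True by auto
          qed auto
        qed
        show "AE x in lborel. (\<lambda>i. q (real (Suc i) * x) * indicator {0..a} x) \<longlonglongrightarrow> 0"
          using AE_lborel_singleton[of 0]
        proof (rule AE_mp, intro AE_I2 impI)
          fix x :: real assume "x \<noteq> 0"
          show "(\<lambda>i. q (real (Suc i) * x) * indicator {0..a} x) \<longlonglongrightarrow> 0"
          proof (cases "x \<in> {0..a}")
            case True
            then have x: "x > 0" using \<open>x \<noteq> 0\<close> by auto
            have "filterlim (\<lambda>i. real (Suc i)) at_top sequentially"
              using filterlim_sequentially_Suc[of real at_top] filterlim_real_sequentially by blast
            then have "filterlim (\<lambda>i. real (Suc i) * x) at_top sequentially"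
              by (rule filterlim_at_top_mult_tendsto_pos[OF tendsto_const x])
            then have "((\<lambda>i. p (real (Suc i) * x)) \<longlongrightarrow> 0) sequentially"
              using limtop by (rule filterlim_compose[rotated])
            moreover have "q (real (Suc i) * x) = p (real (Suc i) * x)" for i
              using x by (simp add: q_def)
            ultimately show ?thesis using True by simp
          qed simp
        qed
      qed auto
      then have "(\<lambda>n. enn2real (G n)) \<longlonglongrightarrow> 0"
        using tendsto_enn2real[of G 0] by simp
      then show ?thesis using eq by simp
    qed
  qed
  show ?thesis using P1 P2 P3 P4 P5 P6 P7 by blast
qed


context finite_measure
begin

lemma na_half:
  assumes na: "non_atomic M" and D: "D \<in> sets M" "measure M D > 0"
  shows "\<exists>D'\<in>sets M. D' \<subseteq> D \<and> 0 < measure M D' \<and> measure M D' \<le> measure M D / 2"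
proof -
  have "emeasure M D > 0" using D by (simp add: emeasure_eq_measure)
  then obtain B where B: "B \<in> sets M" "B \<subseteq> D" "0 < emeasure M B" "emeasure M B < emeasure M D"
    using na D unfolding non_atomic_def by blast
  have b: "0 < measure M B" "measure M B < measure M D"
    using B by (auto simp: emeasure_eq_measure ennreal_less_iff)
  have c: "measure M (D - B) = measure M D - measure M B"
    using B D by (simp add: finite_measure_Diff)
  show ?thesis
  proof (cases "measure M B \<le> measure M D / 2")
    case True then show ?thesis using B b by blast
  next
    case False
    then show ?thesis using B b c D by (intro bexI[of _ "D - B"]) auto
  qed
qed

lemma na_small_pow:
  assumes na: "non_atomic M" and A: "A \<in> sets M" "measure M A > 0"
  shows "\<exists>C\<in>sets M. C \<subseteq> A \<and> 0 < measure M C \<and> measure M C \<le> measure M A / 2^n"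
proof (induction n)
  case 0 then show ?case using A by auto
next
  case (Suc n)
  then obtain C where C: "C\<in>sets M" "C \<subseteq> A" "0 < measure M C" "measure M C \<le> measure M A / 2^n"
    by blast
  obtain D where D: "D\<in>sets M" "D \<subseteq> C" "0 < measure M D" "measure M D \<le> measure M C / 2"
    using na_half[OF na C(1,3)] by blast
  have "measure M C / 2 \<le> measure M A / 2^n / 2" using C(4) by (intro divide_right_mono) auto
  also have "measure M A / 2^n / 2 = measure M A / 2^Suc n" by (simp add: power_Suc mult.commute)
  finally have "measure M D \<le> measure M A / 2^Suc n" using D(4) by linarith
  then show ?case using C D by blast
qed

lemma na_small:
  assumes na: "non_atomic M" and A: "A \<in> sets M" "measure M A > 0" and e: "e > 0"
  shows "\<exists>C\<in>sets M. C \<subseteq> A \<and> 0 < measure M C \<and> measure M C < e"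
proof -
  obtain n where n: "(1/2::real)^n < e / measure M A"
    using real_arch_pow_inv[of "e / measure M A" "1/2"] e A by auto
  have "measure M A / 2^n = measure M A * (1/2)^n" by (simp add: power_one_over)
  also have "\<dots> < measure M A * (e / measure M A)"
    using n A by (intro mult_strict_left_mono) auto
  also have "\<dots> = e" using A by simp
  finally have lt: "measure M A / 2^n < e" .
  obtain C where "C\<in>sets M" "C \<subseteq> A" "0 < measure M C" "measure M C \<le> measure M A / 2^n"
    using na_small_pow[OF na A, of n] by blast
  then show ?thesis using lt by (intro bexI[of _ C]) auto
qed

lemma sierpinski:
  assumes na: "non_atomic M" and A: "A \<in> sets M" and c: "0 \<le> c" "c \<le> measure M A"
  shows "\<exists>B\<in>sets M. B \<subseteq> A \<and> measure M B = c"
proof -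
  define cand where "cand S = {C \<in> sets M. C \<subseteq> A - S \<and> measure M S + measure M C \<le> c}" for S
  define s where "s S = Sup (measure M ` cand S)" for S
  define step where "step S = S \<union> (SOME C. C \<in> cand S \<and> s S / 2 \<le> measure M C)" for S
  define Bs where "Bs n = (step ^^ n) {}" for n
  have cle: "measure M C \<le> c" if "C \<in> cand S" for C S
  proof -
    have "0 \<le> measure M S" by simp
    moreover have "measure M S + measure M C \<le> c" using that by (simp add: cand_def)
    ultimately show ?thesis by linarith
  qed
  have bdd: "bdd_above (measure M ` cand S)" for S
    by (rule bdd_aboveI[of _ c]) (use cle in blast)
  have upper: "measure M C \<le> s S" if "C \<in> cand S" for C S
    unfolding s_def using bdd that by (intro cSup_upper) auto
  have ex: "\<exists>C. C \<in> cand S \<and> s S / 2 \<le> measure M C" if "S\<in>sets M" "measure M S \<le> c" for S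
  proof -
    have e: "{} \<in> cand S" using that by (auto simp: cand_def)
    then have s0: "0 \<le> s S" using upper[of "{}" S] by simp
    show ?thesis
    proof (cases "s S = 0")
      case True then show ?thesis using e by auto
    next
      case False
      then have "s S / 2 < Sup (measure M ` cand S)" using s0 unfolding s_def by simp
      then obtain y where "y \<in> measure M ` cand S" "s S / 2 < y"
        using less_cSup_iff[OF _ bdd] e by blast
      then show ?thesis by auto
    qed
  qed
  have stepP: "step S \<in> sets M \<and> step S \<subseteq> A \<and> measure M (step S) \<le> c \<and>
      measure M (step S) \<ge> measure M S + s S / 2 \<and> S \<subseteq> step S"
    if S: "S \<in> sets M" "S \<subseteq> A" "measure M S \<le> c" for S
  proof -
    define C where "C = (SOME C. C \<in> cand S \<and> s S / 2 \<le> measure M C)"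
    have C: "C \<in> cand S" "s S / 2 \<le> measure M C"
      using someI_ex[OF ex[OF S(1,3)]] unfolding C_def by blast+
    have st: "step S = S \<union> C" unfolding step_def C_def ..
    have Cs: "C \<in> sets M" "C \<subseteq> A - S" "measure M S + measure M C \<le> c"
      using C(1) by (auto simp: cand_def)
    have m: "measure M (S \<union> C) = measure M S + measure M C"
      using Cs S by (intro finite_measure_Union) auto
    show ?thesis using Cs C m st S by auto
  qed
  have BsSuc: "Bs (Suc n) = step (Bs n)" for n by (simp add: Bs_def)
  have inv0: "Bs n \<in> sets M \<and> Bs n \<subseteq> A \<and> measure M (Bs n) \<le> c" for n
  proof (induction n)
    case 0 then show ?case using c by (simp add: Bs_def)
  next
    case (Suc n) then show ?case using stepP[of "Bs n"] BsSuc[of n] by auto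
  qed
  have inv: "Bs n \<in> sets M \<and> Bs n \<subseteq> A \<and> measure M (Bs n) \<le> c \<and>
     measure M (Bs (Suc n)) \<ge> measure M (Bs n) + s (Bs n) / 2 \<and> Bs n \<subseteq> Bs (Suc n)" for n
    using inv0[of n] stepP[of "Bs n"] BsSuc[of n] by auto
  have inc: "incseq Bs" using inv by (intro incseq_SucI) auto
  define B where "B = (\<Union>n. Bs n)"
  have Bs: "B \<in> sets M" "B \<subseteq> A" using inv by (auto simp: B_def)
  have lim: "(\<lambda>n. measure M (Bs n)) \<longlonglongrightarrow> measure M B"
    unfolding B_def using inv inc by (intro finite_Lim_measure_incseq) auto
  have Bc: "measure M B \<le> c"
    using lim inv by (intro LIMSEQ_le_const2) auto
  have "measure M B = c"
  proof (rule ccontr)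
    assume "measure M B \<noteq> c"
    with Bc have lt: "measure M B < c" by simp
    have "measure M (A - B) = measure M A - measure M B" using Bs A by (simp add: finite_measure_Diff)
    then have pos: "measure M (A - B) > 0" using lt c by simp
    obtain C where C: "C \<in> sets M" "C \<subseteq> A - B" "0 < measure M C" "measure M C < c - measure M B"
      using na_small[OF na _ pos, of "c - measure M B"] lt Bs A by auto
    have "measure M C \<le> s (Bs n)" for n
    proof (rule upper)
      have "Bs n \<subseteq> B" by (auto simp: B_def)
      then have "measure M (Bs n) \<le> measure M B" using Bs inv by (intro finite_measure_mono) auto
      then show "C \<in> cand (Bs n)" using C \<open>Bs n \<subseteq> B\<close> by (auto simp: cand_def)
    qed
    then have grow: "measure M (Bs n) \<ge> real n * measure M C / 2" for n
    proof (induction n)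
      case 0 show ?case by (simp add: Bs_def)
    next
      case (Suc n)
      have "measure M (Bs (Suc n)) \<ge> measure M (Bs n) + s (Bs n) / 2" using inv by blast
      moreover have "s (Bs n) \<ge> measure M C" using Suc.prems by blast
      moreover have "real (Suc n) * measure M C / 2 = real n * measure M C / 2 + measure M C / 2"
        by (simp add: distrib_right add_divide_distrib)
      moreover have "real n * measure M C / 2 \<le> measure M (Bs n)" using Suc.IH Suc.prems by blast
      ultimately show ?case by linarith
    qed
    obtain n :: nat where "real n > 2 * c / measure M C" using reals_Archimedean2 by blast
    then have "2 * c < real n * measure M C" using C(3) by (simp add: pos_divide_less_eq)
    then have "real n * measure M C / 2 > c" by linarith
    with grow[of n] inv[of n] show False by linarith
  qed
  then show ?thesis using Bs by blast
qed

end


lemma non_atomic_density: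
  assumes na: "non_atomic M" and g[measurable]: "g \<in> borel_measurable M"
    and fin: "emeasure (density M g) (space M) < \<infinity>"
  shows "non_atomic (density M g)"
  unfolding non_atomic_def
proof (intro ballI impI)
  fix A assume A: "A \<in> sets (density M g)" and Apos: "0 < emeasure (density M g) A"
  have As[measurable]: "A \<in> sets M" using A by simp
  define A' where "A' = A \<inter> {x\<in>space M. 0 < g x}"
  have A's[measurable]: "A' \<in> sets M" unfolding A'_def by measurable
  have posS: "0 < emeasure (density M g) S" if S[measurable]: "S \<in> sets M" "S \<subseteq> A'" "0 < emeasure M S" for S
  proof (rule ccontr)
    assume "\<not> 0 < emeasure (density M g) S"
    then have "(\<integral>\<^sup>+ x. g x * indicator S x \<partial>M) = 0" by (simp add: emeasure_density)
    then have "AE x in M. g x * indicator S x = 0" by (subst (asm) nn_integral_0_iff_AE) auto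
    then have "AE x in M. x \<notin> S"
      by eventually_elim (use S(2) in \<open>auto simp: A'_def indicator_def\<close>)
    then have "emeasure M S = 0"
      using AE_iff_measurable[of S M "\<lambda>x. x \<notin> S"] sets.sets_into_space[OF S(1)] by auto
    then show False using S by simp
  qed
  have "0 < emeasure M A'"
  proof (rule ccontr)
    assume "\<not> 0 < emeasure M A'"
    then have "A' \<in> null_sets M" by auto
    then have "AE x in M. x \<notin> A'" by (rule AE_not_in)
    then have "AE x in M. g x * indicator A x = 0"
      by eventually_elim (use sets.sets_into_space[OF As] in \<open>auto simp: A'_def indicator_def\<close>)
    then have "(\<integral>\<^sup>+ x. g x * indicator A x \<partial>M) = 0" by (subst nn_integral_0_iff_AE) auto
    then show False using Apos by (simp add: emeasure_density)
  qed
  then obtain B where B[measurable]: "B \<in> sets M" and B2: "B \<subseteq> A'" "0 < emeasure M B" "emeasure M B < emeasure M A'"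
    using na A's unfolding non_atomic_def by blast
  have "emeasure M A' = emeasure M B + emeasure M (A' - B)"
    using B B2 by (subst plus_emeasure) (auto simp: Un_absorb1 Un_Diff_cancel)
  then have "0 < emeasure M (A' - B)" using B2 by (metis add.right_neutral not_gr_zero order.irrefl)
  then have p2: "0 < emeasure (density M g) (A' - B)" using B by (intro posS) auto
  have p1: "0 < emeasure (density M g) B" using B B2 by (intro posS) auto
  have "emeasure (density M g) B < \<infinity>"
    using fin emeasure_mono[of B "space M" "density M g"] sets.sets_into_space[OF B] by auto
  then have "emeasure (density M g) B < emeasure (density M g) B + emeasure (density M g) (A' - B)"
    using p2 by (metis add.right_neutral ennreal_add_left_cancel_less)
  also have "\<dots> = emeasure (density M g) (B \<union> (A' - B))"
    by (rule plus_emeasure) auto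
  also have "\<dots> \<le> emeasure (density M g) A"
    using B2 by (intro emeasure_mono) (auto simp: A'_def)
  finally show "\<exists>B\<in>sets (density M g). B \<subseteq> A \<and> 0 < emeasure (density M g) B \<and>
      emeasure (density M g) B < emeasure (density M g) A"
    using p1 B B2 by (intro bexI[of _ B]) (auto simp: A'_def)
qed


theorem mainTheorem18:
  fixes M :: "'a measure" and \<Phi> :: "real \<Rightarrow> real" and T :: "('a \<Rightarrow> real) \<Rightarrow> real"
  assumes "non_atomic M"
    and "N_star_function \<Phi>"
    and "continuous_linear_functional_L_Phi M \<Phi> T"
  shows "\<forall>f\<in>L_Phi M \<Phi>. T f = 0"
proof -
  note PH = Nstar_props[OF assms(2)]
  have Phi_nn: "\<And>x. 0 \<le> \<Phi> x" using PH by blast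
  have Phi0: "\<Phi> 0 = 0" using PH by blast
  have Phi_sym: "\<And>x. \<Phi> (-x) = \<Phi> x" using PH by blast
  have Phi_meas[measurable]: "\<Phi> \<in> borel_measurable borel" using PH by blast
  have Phi_scale: "\<And>c y. 1 \<le> c \<Longrightarrow> \<Phi> (c*y) \<le> c * \<Phi> y" using PH by blast
  have Phi_lim: "\<And>y. (\<lambda>n. \<Phi> (real (Suc n) * y) / real (Suc n)) \<longlonglongrightarrow> 0" using PH by blast
  have add: "\<And>f g. f \<in> L_Phi M \<Phi> \<Longrightarrow> g \<in> L_Phi M \<Phi> \<Longrightarrow> T (\<lambda>x. f x + g x) = T f + T g"
    and hom: "\<And>f c. f \<in> L_Phi M \<Phi> \<Longrightarrow> T (\<lambda>x. c * f x) = c * T f"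
    and cont: "\<And>f \<epsilon>. f \<in> L_Phi M \<Phi> \<Longrightarrow> \<epsilon> > 0 \<Longrightarrow> \<exists>\<delta>>0. \<forall>g\<in>L_Phi M \<Phi>.
        d_Phi M \<Phi> f g < ennreal \<delta> \<longrightarrow> \<bar>T g - T f\<bar> < \<epsilon>"
    using assms(3) unfolding continuous_linear_functional_L_Phi_def by blast+
  have memL: "h \<in> L_Phi M \<Phi> \<longleftrightarrow> h \<in> borel_measurable M \<and> (\<integral>\<^sup>+x. ennreal (\<Phi> (h x)) \<partial>M) < \<infinity>" for h
    by (simp add: L_Phi_def)
  have zeroL: "(\<lambda>x. 0) \<in> L_Phi M \<Phi>" by (simp add: L_Phi_def Phi0)
  have T0: "T (\<lambda>x. 0) = 0" using hom[OF zeroL, of 0] by simp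
  obtain \<delta> where \<delta>0: "\<delta> > 0" and \<delta>: "\<forall>g\<in>L_Phi M \<Phi>. d_Phi M \<Phi> (\<lambda>x. 0) g < ennreal \<delta> \<longrightarrow> \<bar>T g - T (\<lambda>x. 0)\<bar> < 1"
    using cont[OF zeroL, of 1] by auto
  have smallT: "\<bar>T g\<bar> < 1" if "g \<in> L_Phi M \<Phi>" "(\<integral>\<^sup>+x. ennreal (\<Phi> (g x)) \<partial>M) < ennreal \<delta>" for g
  proof -
    have "d_Phi M \<Phi> (\<lambda>x. 0) g = (\<integral>\<^sup>+x. ennreal (\<Phi> (g x)) \<partial>M)"
      unfolding d_Phi_def using Phi_sym by simp
    then show ?thesis using \<delta> that T0 by auto
  qed
  have small: "\<bar>T h\<bar> < 1 / real m"
    if h: "h \<in> L_Phi M \<Phi>" and m: "m > 0" and I: "(\<integral>\<^sup>+x. ennreal (\<Phi> (real m * h x)) \<partial>M) < ennreal \<delta>" for h m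
  proof -
    have hm[measurable]: "h \<in> borel_measurable M" using h memL by blast
    have "(\<lambda>x. real m * h x) \<in> L_Phi M \<Phi>"
      unfolding memL using I by (auto intro: less_le_trans[OF _ less_imp_le[OF ennreal_less_top]])
    then have "\<bar>T (\<lambda>x. real m * h x)\<bar> < 1" using smallT I by blast
    then have "real m * \<bar>T h\<bar> < 1" using hom[OF h, of "real m"] by (simp add: abs_mult)
    then show ?thesis using m by (simp add: field_simps)
  qed
  have key: "\<forall>h. h \<in> L_Phi M \<Phi> \<longrightarrow> (\<integral>\<^sup>+x. ennreal (\<Phi> (real m * h x)) \<partial>M) \<le> ennreal (real k * \<delta> / 2)
      \<longrightarrow> \<bar>T h\<bar> \<le> (real k + 1) / real m" if m: "m > 0" for m k :: nat
  proof (induction k)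
    case 0
    show ?case
    proof (intro allI impI)
      fix h assume h: "h \<in> L_Phi M \<Phi>" and I: "(\<integral>\<^sup>+x. ennreal (\<Phi> (real m * h x)) \<partial>M) \<le> ennreal (real 0 * \<delta> / 2)"
      then have "(\<integral>\<^sup>+x. ennreal (\<Phi> (real m * h x)) \<partial>M) < ennreal \<delta>" using \<delta>0 by simp
      then show "\<bar>T h\<bar> \<le> (real 0 + 1) / real m" using small[OF h m] by simp
    qed
  next
    case (Suc k)
    show ?case
    proof (intro allI impI)
      fix h assume h: "h \<in> L_Phi M \<Phi>"
        and I: "(\<integral>\<^sup>+x. ennreal (\<Phi> (real m * h x)) \<partial>M) \<le> ennreal (real (Suc k) * \<delta> / 2)"
      have hm[measurable]: "h \<in> borel_measurable M" using h memL by blast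
      have mpos: "real m > 0" using m by simp
      show "\<bar>T h\<bar> \<le> (real (Suc k) + 1) / real m"
      proof (cases "(\<integral>\<^sup>+x. ennreal (\<Phi> (real m * h x)) \<partial>M) < ennreal \<delta>")
        case True
        then have "\<bar>T h\<bar> < 1 / real m" using small[OF h m] by simp
        also have "\<dots> \<le> (real (Suc k) + 1) / real m" using mpos by (intro divide_right_mono) auto
        finally show ?thesis by simp
      next
        case False
        define g where "g x = ennreal (\<Phi> (real m * h x))" for x
        have gm[measurable]: "g \<in> borel_measurable M" unfolding g_def by measurable
        define N where "N = density M g"
        have Ifin: "(\<integral>\<^sup>+x. g x \<partial>M) < \<infinity>"
          using I unfolding g_def by (auto intro: le_less_trans)
        have Nsp: "emeasure N (space M) = (\<integral>\<^sup>+x. g x \<partial>M)"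
          unfolding N_def by (subst emeasure_density) (auto intro!: nn_integral_cong)
        have spN: "space N = space M" "sets N = sets M" unfolding N_def by auto
        have finN: "finite_measure N" by (rule finite_measureI) (use Nsp Ifin spN in auto)
        have naN: "non_atomic N" unfolding N_def
          by (rule non_atomic_density[OF assms(1) gm]) (use Nsp Ifin N_def in auto)
        have mN: "measure N (space M) = enn2real (\<integral>\<^sup>+x. g x \<partial>M)"
          by (simp add: measure_def Nsp)
        have Ige: "ennreal \<delta> \<le> (\<integral>\<^sup>+x. g x \<partial>M)" using False unfolding g_def by simp
        have Ieq: "ennreal (enn2real (\<integral>\<^sup>+x. g x \<partial>M)) = (\<integral>\<^sup>+x. g x \<partial>M)"
          using Ifin by (intro ennreal_enn2real) simp
        have dle: "\<delta> \<le> measure N (space M)"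
        proof -
          have "ennreal \<delta> \<le> ennreal (enn2real (\<integral>\<^sup>+x. g x \<partial>M))" using Ige Ieq by simp
          then show ?thesis unfolding mN by (subst (asm) ennreal_le_iff) simp_all
        qed
        have spS: "space M \<in> sets N" using spN(2) by simp
        have "\<exists>B\<in>sets N. B \<subseteq> space M \<and> measure N B = \<delta> / 2"
          by (rule finite_measure.sierpinski[OF finN naN spS]) (use \<delta>0 dle in auto)
        then obtain B where B: "B \<in> sets N" "B \<subseteq> space M" "measure N B = \<delta> / 2" by blast
        have Bs[measurable]: "B \<in> sets M" using B spN by simp
        have mNle: "measure N (space M) \<le> real (Suc k) * \<delta> / 2"
        proof -
          have "(\<integral>\<^sup>+x. g x \<partial>M) \<le> ennreal (real (Suc k) * \<delta> / 2)" using I unfolding g_def .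
          then have "ennreal (enn2real (\<integral>\<^sup>+x. g x \<partial>M)) \<le> ennreal (real (Suc k) * \<delta> / 2)"
            using Ieq by simp
          moreover have "0 \<le> real (Suc k) * \<delta> / 2" using \<delta>0 by simp
          ultimately show ?thesis unfolding mN by simp
        qed
        have mDiff: "measure N (space M - B) = measure N (space M) - \<delta> / 2"
          using finite_measure.finite_measure_Diff[OF finN, of "space M" B] B spN by simp
        define h1 where "h1 x = indicator B x * h x" for x
        define h2 where "h2 x = (1 - indicator B x) * h x" for x
        have h1m[measurable]: "h1 \<in> borel_measurable M" unfolding h1_def by measurable
        have h2m[measurable]: "h2 \<in> borel_measurable M" unfolding h2_def by measurable
        have hfin: "(\<integral>\<^sup>+x. ennreal (\<Phi> (h x)) \<partial>M) < \<infinity>" using h memL by blast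
        have h1L: "h1 \<in> L_Phi M \<Phi>"
        proof -
          have "(\<integral>\<^sup>+x. ennreal (\<Phi> (h1 x)) \<partial>M) \<le> (\<integral>\<^sup>+x. ennreal (\<Phi> (h x)) \<partial>M)"
            by (rule nn_integral_mono) (auto simp: h1_def indicator_def Phi0 Phi_nn)
          then show ?thesis using hfin h1m memL by (auto intro: le_less_trans)
        qed
        have h2L: "h2 \<in> L_Phi M \<Phi>"
        proof -
          have "(\<integral>\<^sup>+x. ennreal (\<Phi> (h2 x)) \<partial>M) \<le> (\<integral>\<^sup>+x. ennreal (\<Phi> (h x)) \<partial>M)"
            by (rule nn_integral_mono) (auto simp: h2_def indicator_def Phi0 Phi_nn)
          then show ?thesis using hfin h2m memL by (auto intro: le_less_trans)
        qed
        have hsplit: "h = (\<lambda>x. h1 x + h2 x)" by (auto simp: h1_def h2_def fun_eq_iff algebra_simps)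
        have Th: "T h = T h1 + T h2" using add[OF h1L h2L] hsplit by simp
        have I1: "(\<integral>\<^sup>+x. ennreal (\<Phi> (real m * h1 x)) \<partial>M) = emeasure N B"
          unfolding N_def
          by (subst emeasure_density) (auto intro!: nn_integral_cong simp: g_def h1_def indicator_def Phi0)
        have I2: "(\<integral>\<^sup>+x. ennreal (\<Phi> (real m * h2 x)) \<partial>M) = emeasure N (space M - B)"
          unfolding N_def
          by (subst emeasure_density) (auto intro!: nn_integral_cong simp: g_def h2_def indicator_def Phi0)
        have eB: "emeasure N B = ennreal (\<delta> / 2)"
          using finite_measure.emeasure_eq_measure[OF finN, of B] B by simp
        have eD: "emeasure N (space M - B) \<le> ennreal (real k * \<delta> / 2)"
        proof -
          have "emeasure N (space M - B) = ennreal (measure N (space M - B))"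
            using finite_measure.emeasure_eq_measure[OF finN] by simp
          also have "measure N (space M - B) \<le> real k * \<delta> / 2"
            using mDiff mNle by (simp add: field_simps)
          then have "ennreal (measure N (space M - B)) \<le> ennreal (real k * \<delta> / 2)"
            by (rule ennreal_leI)
          finally show ?thesis .
        qed
        have T1: "\<bar>T h1\<bar> < 1 / real m"
        proof -
          have "ennreal (\<delta>/2) < ennreal \<delta>" using \<delta>0 by (intro ennreal_lessI) auto
          then show ?thesis using small[OF h1L m] I1 eB by simp
        qed
        have T2: "\<bar>T h2\<bar> \<le> (real k + 1) / real m"
          using Suc.IH h2L I2 eD by auto
        have "\<bar>T h\<bar> \<le> \<bar>T h1\<bar> + \<bar>T h2\<bar>" using Th by simp
        also have "\<dots> \<le> 1 / real m + (real k + 1) / real m" using T1 T2 by simp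
        also have "\<dots> = (real (Suc k) + 1) / real m" by (simp add: add_divide_distrib[symmetric])
        finally show ?thesis .
      qed
    qed
  qed
  show ?thesis
  proof
    fix f assume f: "f \<in> L_Phi M \<Phi>"
    have fm[measurable]: "f \<in> borel_measurable M" and ffin: "(\<integral>\<^sup>+x. ennreal (\<Phi> (f x)) \<partial>M) < \<infinity>"
      using f memL by blast+
    define J where "J n = (\<integral>\<^sup>+x. ennreal (\<Phi> (real (Suc n) * f x) / real (Suc n)) \<partial>M)" for n
    have J0: "J \<longlonglongrightarrow> 0"
    proof -
      have "J \<longlonglongrightarrow> (\<integral>\<^sup>+x. 0 \<partial>M)" unfolding J_def
      proof (rule nn_integral_dominated_convergence[where w="\<lambda>x. ennreal (\<Phi> (f x))"
            and u="\<lambda>n x. ennreal (\<Phi> (real (Suc n) * f x) / real (Suc n))" and u'="\<lambda>x. 0"])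
        show "AE x in M. ennreal (\<Phi> (real (Suc j) * f x) / real (Suc j)) \<le> ennreal (\<Phi> (f x))" for j
        proof (rule AE_I2, rule ennreal_leI)
          fix x
          have "\<Phi> (real (Suc j) * f x) \<le> real (Suc j) * \<Phi> (f x)" by (rule Phi_scale) simp
          moreover have "real (Suc j) > 0" by simp
          ultimately show "\<Phi> (real (Suc j) * f x) / real (Suc j) \<le> \<Phi> (f x)"
            by (simp add: divide_le_eq mult.commute del: of_nat_Suc)
        qed
        show "AE x in M. (\<lambda>i. ennreal (\<Phi> (real (Suc i) * f x) / real (Suc i))) \<longlonglongrightarrow> 0"
        proof (rule AE_I2)
          fix x
          show "(\<lambda>i. ennreal (\<Phi> (real (Suc i) * f x) / real (Suc i))) \<longlonglongrightarrow> 0"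
            using tendsto_ennrealI[OF Phi_lim[of "f x"]] by simp
        qed
      qed (use ffin in auto)
      then show ?thesis by simp
    qed
    have bound: "\<bar>T f\<bar> \<le> \<eta>" if \<eta>: "\<eta> > 0" for \<eta>
    proof -
      have pos: "0 < ennreal (\<eta> * \<delta> / 4)" using \<eta> \<delta>0 by simp
      have e1: "eventually (\<lambda>n. J n < ennreal (\<eta> * \<delta> / 4)) sequentially"
        using order_tendstoD(2)[OF J0 pos] .
      obtain N :: nat where N: "4 / \<eta> < real N" using reals_Archimedean2 by blast
      have e2: "eventually (\<lambda>n. 2 / real (Suc n) \<le> \<eta> / 2) sequentially"
        unfolding eventually_sequentially
      proof (intro exI allI impI)
        fix n assume "N \<le> n"
        then have "4 / \<eta> < real (Suc n)" using N by simp
        then have "4 < \<eta> * real (Suc n)" using \<eta> by (simp add: divide_less_eq mult.commute del: of_nat_Suc)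
        then show "2 / real (Suc n) \<le> \<eta> / 2" by (simp add: divide_le_eq del: of_nat_Suc)
      qed
      obtain n where Jn: "J n < ennreal (\<eta> * \<delta> / 4)" and n2: "2 / real (Suc n) \<le> \<eta> / 2"
        using eventually_conj[OF e1 e2] unfolding eventually_sequentially by blast
      define m where "m = Suc n"
      have mpos: "real m > 0" by (simp add: m_def)
      define j where "j = enn2real (J n)"
      have Jfin: "J n < \<infinity>" using order.strict_trans[OF Jn ennreal_less_top] by simp
      have Jj: "J n = ennreal j" unfolding j_def using Jfin by (simp add: ennreal_enn2real)
      have j0: "0 \<le> j" by (simp add: j_def)
      have jlt: "j < \<eta> * \<delta> / 4" using Jn Jj j0 by (simp add: ennreal_less_iff)
      have Ieq: "(\<integral>\<^sup>+x. ennreal (\<Phi> (real m * f x)) \<partial>M) = ennreal (real m * j)"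
      proof -
        have "(\<integral>\<^sup>+x. ennreal (\<Phi> (real m * f x)) \<partial>M) =
            (\<integral>\<^sup>+x. ennreal (real m) * ennreal (\<Phi> (real (Suc n) * f x) / real (Suc n)) \<partial>M)"
        proof (rule nn_integral_cong)
          fix x
          have "ennreal (real m) * ennreal (\<Phi> (real (Suc n) * f x) / real (Suc n)) =
              ennreal (real m * (\<Phi> (real (Suc n) * f x) / real (Suc n)))"
            by (rule ennreal_mult[symmetric]) (auto simp: Phi_nn)
          also have "real m * (\<Phi> (real (Suc n) * f x) / real (Suc n)) = \<Phi> (real m * f x)"
            by (simp add: m_def del: of_nat_Suc)
          finally show "ennreal (\<Phi> (real m * f x)) =
              ennreal (real m) * ennreal (\<Phi> (real (Suc n) * f x) / real (Suc n))" by simp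
        qed
        also have "\<dots> = ennreal (real m) * J n" unfolding J_def by (rule nn_integral_cmult) measurable
        also have "\<dots> = ennreal (real m * j)" using Jj j0 by (simp add: ennreal_mult)
        finally show ?thesis .
      qed
      define x where "x = 2 * real m * j / \<delta>"
      have x0: "0 \<le> x" unfolding x_def using j0 \<delta>0 by simp
      define k where "k = nat \<lceil>x\<rceil>"
      have k1: "x \<le> real k" unfolding k_def by linarith
      have k2: "real k \<le> x + 1" unfolding k_def using x0 by linarith
      have "2 * real m * j \<le> real k * \<delta>" using k1 \<delta>0 unfolding x_def by (simp add: divide_le_eq)
      then have "real m * j \<le> real k * \<delta> / 2" by simp
      then have Ile: "(\<integral>\<^sup>+x. ennreal (\<Phi> (real m * f x)) \<partial>M) \<le> ennreal (real k * \<delta> / 2)"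
        unfolding Ieq by (rule ennreal_leI)
      have "\<bar>T f\<bar> \<le> (real k + 1) / real m" using key[of m k] f Ile by (simp add: m_def)
      also have "\<dots> \<le> (x + 2) / real m" using k2 mpos by (intro divide_right_mono) auto
      also have "(x + 2) / real m = 2 * j / \<delta> + 2 / real m"
        unfolding x_def using mpos \<delta>0 by (simp add: add_divide_distrib)
      also have "2 * j / \<delta> < \<eta> / 2"
      proof -
        have "2 * j < (\<eta> / 2) * \<delta>" using jlt by simp
        then show ?thesis using \<delta>0 by (simp add: divide_less_eq)
      qed
      then have "2 * j / \<delta> + 2 / real m < \<eta>" using n2 m_def by simp
      finally show ?thesis by simp
    qed
    show "T f = 0"
    proof (rule ccontr)
      assume "T f \<noteq> 0"
      then have "\<bar>T f\<bar> > 0" by simp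
      from bound[OF half_gt_zero[OF this]] this show False by simp
    qed
  qed
qed

end
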